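(* Let $p\geq1$ and let $A$ be a complex $r$-matrix of order $n_1\times\cdots\times n_r$. (a) For every $k\in[r]$, \[ \|A\|_p\geq\frac{1}{n_1^{1/p}\cdots n_r^{1/p}}\sum_{j\in[n_k]}\big|\Sigma A^{(k)}_j\big|.\qquad( * ) \] (b) If $A$ is nonnegative, $p>1$, and equality holds in $( * )$ for all $k\in[r]$, then $A$ is regular. (c) If $p\geq r$ and $A$ is nonnegative, then equality holds in $( * )$ for all $k\in[r]$ if and only if $A$ is regular.
   Context: An $r$-matrix of order $n_1\times\cdots\times n_r$ is a function on $[n_1]\times\cdots\times[n_r]$ with values $a_{i_1,\ldots,i_r}$. For $k\in[r]$, $j\in[n_k]$, the slice $A^{(k)}_j$ is the $(r-1)$-matrix obtained by fixing $i_k=j$; $\Sigma B$ is the sum of all entries of $B$. $A$ is regular if for every $k\in[r]$, $\Sigma A^{(k)}_1=\cdots=\Sigma A^{(k)}_{n_k}$. The spectral $p$-norm is $\|A\|_p=\max\{|\sum a_{i_1,\ldots,i_r}\overline{x^{(1)}_{i_1}}\cdots\overline{x^{(r)}_{i_r}}|:\mathbf{x}^{(k)}\in\mathbb{C}^{n_k},\ |\mathbf{x}^{(k)}|_p=1\ \forall k\}$. *)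

theory Defs
  imports "HOL-Analysis.Analysis"
begin

text \<open>An r-matrix of order n_0 x ... x n_(r-1) (0-based indices): the orders are
  given by n :: nat => nat (only n k for k < r matter), index tuples are
  extensional functions i with i k < n k for k < r, and the matrix is a function
  A from index tuples to complex numbers (values outside the index set are irrelevant).\<close>

definition idx :: "nat \<Rightarrow> (nat \<Rightarrow> nat) \<Rightarrow> (nat \<Rightarrow> nat) set" where
  "idx r n = PiE {..<r} (\<lambda>k. {..<n k})"

definition slice_sum ::
  "nat \<Rightarrow> (nat \<Rightarrow> nat) \<Rightarrow> ((nat \<Rightarrow> nat) \<Rightarrow> complex) \<Rightarrow> nat \<Rightarrow> nat \<Rightarrow> complex" where
  "slice_sum r n A k j = (\<Sum>i\<in>{i\<in>idx r n. i k = j}. A i)"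

definition regular :: "nat \<Rightarrow> (nat \<Rightarrow> nat) \<Rightarrow> ((nat \<Rightarrow> nat) \<Rightarrow> complex) \<Rightarrow> bool" where
  "regular r n A \<longleftrightarrow>
     (\<forall>k<r. \<forall>j<n k. \<forall>j'<n k. slice_sum r n A k j = slice_sum r n A k j')"

definition nonneg_matrix :: "nat \<Rightarrow> (nat \<Rightarrow> nat) \<Rightarrow> ((nat \<Rightarrow> nat) \<Rightarrow> complex) \<Rightarrow> bool" where
  "nonneg_matrix r n A \<longleftrightarrow> (\<forall>i\<in>idx r n. Im (A i) = 0 \<and> Re (A i) \<ge> 0)"

definition vec_pnorm :: "real \<Rightarrow> nat \<Rightarrow> (nat \<Rightarrow> complex) \<Rightarrow> real" where
  "vec_pnorm p m x = (\<Sum>j<m. cmod (x j) powr p) powr (1 / p)"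

definition mform ::
  "nat \<Rightarrow> (nat \<Rightarrow> nat) \<Rightarrow> ((nat \<Rightarrow> nat) \<Rightarrow> complex) \<Rightarrow> (nat \<Rightarrow> nat \<Rightarrow> complex) \<Rightarrow> complex" where
  "mform r n A x = (\<Sum>i\<in>idx r n. A i * (\<Prod>k<r. cnj (x k (i k))))"

text \<open>Spectral p-norm (the maximum is attained by compactness, so it equals the supremum).\<close>
definition spec_pnorm :: "real \<Rightarrow> nat \<Rightarrow> (nat \<Rightarrow> nat) \<Rightarrow> ((nat \<Rightarrow> nat) \<Rightarrow> complex) \<Rightarrow> real" where
  "spec_pnorm p r n A =
     Sup {cmod (mform r n A x) | x. \<forall>k<r. vec_pnorm p (n k) (x k) = 1}"

end

theory Submission
  imports Defs "HOL-Analysis.Analysis"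
begin


lemma idx_fin: "finite (idx r n)"
  by (simp add: idx_def finite_PiE)

lemma idx_mem: "i \<in> idx r n \<Longrightarrow> k < r \<Longrightarrow> i k < n k"
  by (auto simp: idx_def PiE_def)

lemma fiber_sum:
  fixes g :: "(nat \<Rightarrow> nat) \<Rightarrow> 'a::comm_semiring_1"
  assumes "k < r"
  shows "(\<Sum>i\<in>idx r n. g i * h (i k)) = (\<Sum>j<n k. h j * (\<Sum>i\<in>{i\<in>idx r n. i k = j}. g i))"
proof -
  have "(\<Sum>i\<in>idx r n. g i * h (i k)) = (\<Sum>j<n k. \<Sum>i\<in>{i\<in>idx r n. i k = j}. g i * h (i k))"
    by (rule sum.group[symmetric]) (use idx_fin idx_mem assms in auto)
  also have "\<dots> = (\<Sum>j<n k. h j * (\<Sum>i\<in>{i\<in>idx r n. i k = j}. g i))"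
    by (intro sum.cong refl) (auto simp: sum_distrib_left mult.commute intro!: sum.cong)
  finally show ?thesis .
qed

lemma pnorm_sum1:
  assumes "vec_pnorm p N v = 1" "p > 0"
  shows "(\<Sum>j<N. cmod (v j) powr p) = 1"
proof -
  define S where "S = (\<Sum>j<N. cmod (v j) powr p)"
  have S0: "S \<ge> 0" unfolding S_def by (auto intro: sum_nonneg)
  have "S powr (1/p) = 1" using assms(1) by (simp add: vec_pnorm_def S_def)
  hence "(S powr (1/p)) powr p = 1" by simp
  hence "S = 1" using S0 assms(2) by (simp add: powr_powr)
  thus ?thesis by (simp add: S_def)
qed

lemma pnorm_le1:
  assumes "vec_pnorm p N v = 1" "p > 0" "j < N"
  shows "cmod (v j) \<le> 1"
proof -
  have "cmod (v j) powr p \<le> (\<Sum>j<N. cmod (v j) powr p)"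
    by (rule member_le_sum) (use assms in auto)
  hence "cmod (v j) powr p \<le> 1 powr p" using pnorm_sum1[OF assms(1,2)] by simp
  then show ?thesis using assms(2)
    by (meson norm_ge_zero not_le powr_less_mono2 zero_le_one)
qed




lemma pnorm_const:
  assumes "N \<ge> 1" "p > 0"
  shows "vec_pnorm p N (\<lambda>_. complex_of_real (real N powr (-1/p))) = 1"
proof -
  have "cmod (complex_of_real (real N powr (-1/p))) powr p = real N powr (-1)"
    using assms by (simp add: powr_powr)
  also have "\<dots> = 1 / real N" using assms by (simp add: powr_minus_divide)
  finally show ?thesis using assms by (simp add: vec_pnorm_def)
qed

lemma mform_bound:
  assumes "p > 0" "\<forall>k<r. vec_pnorm p (n k) (x k) = 1"
  shows "cmod (mform r n A x) \<le> (\<Sum>i\<in>idx r n. cmod (A i))"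
  unfolding mform_def
proof (rule order_trans[OF norm_sum], rule sum_mono)
  fix i assume i: "i \<in> idx r n"
  have "(\<Prod>k<r. cmod (x k (i k))) \<le> 1"
    by (rule prod_le_1) (use assms i idx_mem pnorm_le1 in auto)
  then show "cmod (A i * (\<Prod>k<r. cnj (x k (i k)))) \<le> cmod (A i)"
    by (simp only: norm_mult prod_norm[symmetric] complex_mod_cnj) (simp add: mult_left_le)
qed

lemma spec_ge:
  assumes "p > 0" "\<forall>k<r. vec_pnorm p (n k) (x k) = 1"
  shows "cmod (mform r n A x) \<le> spec_pnorm p r n A"
  unfolding spec_pnorm_def
proof (rule cSup_upper)
  show "cmod (mform r n A x) \<in> {cmod (mform r n A x) |x. \<forall>k<r. vec_pnorm p (n k) (x k) = 1}"
    using assms by blast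
  show "bdd_above {cmod (mform r n A x) |x. \<forall>k<r. vec_pnorm p (n k) (x k) = 1}"
    by (rule bdd_aboveI[of _ "\<Sum>i\<in>idx r n. cmod (A i)"]) (use assms mform_bound in auto)
qed

lemma spec_le:
  assumes "p > 0" "\<forall>k<r. n k \<ge> 1"
    and "\<And>x. \<forall>k<r. vec_pnorm p (n k) (x k) = 1 \<Longrightarrow> cmod (mform r n A x) \<le> B"
  shows "spec_pnorm p r n A \<le> B"
  unfolding spec_pnorm_def
proof (rule cSup_least)
  let ?x = "\<lambda>m. (\<lambda>_::nat. complex_of_real (real (n m) powr (-1/p)))"
  have "\<forall>k<r. vec_pnorm p (n k) (?x k) = 1" using assms pnorm_const by auto
  then have "cmod (mform r n A ?x) \<in> {cmod (mform r n A x) |x. \<forall>k<r. vec_pnorm p (n k) (x k) = 1}"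
    by (intro CollectI exI[of _ ?x] conjI refl)
  then show "{cmod (mform r n A x) |x. \<forall>k<r. vec_pnorm p (n k) (x k) = 1} \<noteq> {}" by (metis empty_iff)
qed (use assms in auto)

definition xv :: "real \<Rightarrow> (nat \<Rightarrow> nat) \<Rightarrow> nat \<Rightarrow> (nat \<Rightarrow> complex) \<Rightarrow> nat \<Rightarrow> nat \<Rightarrow> complex" where
  "xv p n k v = (\<lambda>m. if m = k then v else (\<lambda>_. complex_of_real (real (n m) powr (-1/p))))"

lemma xv_ok:
  assumes "p > 0" "\<forall>k<r. n k \<ge> 1" "vec_pnorm p (n k) v = 1"
  shows "\<forall>m<r. vec_pnorm p (n m) (xv p n k v m) = 1"
  using assms pnorm_const by (auto simp: xv_def)

lemma mform_xv:
  assumes "k < r"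
  shows "mform r n A (xv p n k v) =
    complex_of_real (\<Prod>m\<in>{..<r}-{k}. real (n m) powr (-1/p)) * (\<Sum>j<n k. cnj (v j) * slice_sum r n A k j)"
proof -
  have "(\<Prod>m<r. cnj (xv p n k v m (i m))) = cnj (v (i k)) * complex_of_real (\<Prod>m\<in>{..<r}-{k}. real (n m) powr (-1/p))" for i
  proof -
    have "(\<Prod>m<r. cnj (xv p n k v m (i m))) = cnj (xv p n k v k (i k)) * (\<Prod>m\<in>{..<r}-{k}. cnj (xv p n k v m (i m)))"
      using assms by (subst prod.remove[of _ k]) auto
    also have "(\<Prod>m\<in>{..<r}-{k}. cnj (xv p n k v m (i m))) = (\<Prod>m\<in>{..<r}-{k}. complex_of_real (real (n m) powr (-1/p)))"
      by (intro prod.cong) (auto simp: xv_def)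
    finally show ?thesis by (simp add: xv_def)
  qed
  hence "mform r n A (xv p n k v) = (\<Sum>i\<in>idx r n. (A i * complex_of_real (\<Prod>m\<in>{..<r}-{k}. real (n m) powr (-1/p))) * cnj (v (i k)))"
    unfolding mform_def by (simp add: mult_ac)
  also have "\<dots> = (\<Sum>j<n k. cnj (v j) * (\<Sum>i\<in>{i\<in>idx r n. i k = j}. A i * complex_of_real (\<Prod>m\<in>{..<r}-{k}. real (n m) powr (-1/p))))"
    by (rule fiber_sum[OF assms])
  also have "\<dots> = complex_of_real (\<Prod>m\<in>{..<r}-{k}. real (n m) powr (-1/p)) * (\<Sum>j<n k. cnj (v j) * slice_sum r n A k j)"
    by (simp add: slice_sum_def sum_distrib_left sum_distrib_right mult_ac)
  finally show ?thesis .
qed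

lemma prod_rel:
  fixes p :: real and r k :: nat and n :: "nat \<Rightarrow> nat"
  assumes "k < r" "\<forall>k<r. n k \<ge> 1"
  shows "(\<Prod>m\<in>{..<r}-{k}. real (n m) powr (-1/p)) * real (n k) powr (-1/p) = 1 / (\<Prod>m<r. real (n m) powr (1/p))"
proof -
  have split: "(\<Prod>m<r. f m) = f k * (\<Prod>m\<in>{..<r}-{k}. f m)" for f :: "nat \<Rightarrow> real"
    by (rule prod.remove) (use assms in auto)
  have "(\<Prod>m<r. real (n m) powr (1/p)) * ((\<Prod>m\<in>{..<r}-{k}. real (n m) powr (-1/p)) * real (n k) powr (-1/p))
     = (real (n k) powr (1/p) * real (n k) powr (-1/p)) * (\<Prod>m\<in>{..<r}-{k}. real (n m) powr (1/p) * real (n m) powr (-1/p))"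
    unfolding split[of "\<lambda>m. real (n m) powr (1/p)"] prod.distrib by (simp only: mult_ac)
  also have "\<dots> = 1"
  proof -
    have one: "real (n m) powr (1/p) * real (n m) powr (-1/p) = 1" if "m < r" for m
    proof -
      have "n m \<ge> 1" using assms that by auto
      hence "real (n m) powr (1/p) > 0" by simp
      then show ?thesis by (simp add: powr_minus)
    qed
    have "(\<Prod>m\<in>{..<r}-{k}. real (n m) powr (1/p) * real (n m) powr (-1/p)) = 1"
      by (rule prod.neutral) (use one in auto)
    then show ?thesis using one[OF assms(1)] by simp
  qed
  finally have eq: "(\<Prod>m<r. real (n m) powr (1/p)) * ((\<Prod>m\<in>{..<r}-{k}. real (n m) powr (-1/p)) * real (n k) powr (-1/p)) = 1" .
  have "(\<Prod>m<r. real (n m) powr (1/p)) \<noteq> 0"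
    using eq by (metis mult_zero_left zero_neq_one)
  then show ?thesis using eq by (simp add: eq_divide_eq mult.commute)
qed




lemma tangent_strict:
  fixes u q :: real
  assumes "u \<ge> 0" "u \<noteq> 1" "q > 1"
  shows "u powr q > 1 + q * (u - 1)"
proof (cases "u = 0")
  case True then show ?thesis using assms by simp
next
  case False
  hence u0: "u > 0" using assms by simp
  define h where "h = (\<lambda>x::real. x powr q - q * x)"
  have der: "DERIV h x :> q * x powr (q - 1) - q" if "x > 0" for x
    unfolding h_def using that
    by (auto intro!: derivative_eq_intros)
  have cont: "continuous_on {a..b} h" if "a > 0" for a b
    unfolding h_def using that by (auto intro!: continuous_intros)
  show ?thesis
  proof (cases "u < 1")
    case True
    have "h u > h 1"
    proof (rule DERIV_neg_imp_decreasing_open[OF True _ cont[OF u0]])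
      fix x assume x: "u < x" "x < 1"
      have "x powr (q - 1) < 1 powr (q - 1)"
        using x u0 assms by (intro powr_less_mono2) auto
      then show "\<exists>y. DERIV h x :> y \<and> y < 0"
        using der[of x] x u0 assms by (intro exI[of _ "q * x powr (q - 1) - q"]) auto
    qed
    then show ?thesis unfolding h_def by (simp add: algebra_simps)
  next
    case False
    hence u1: "1 < u" using assms by simp
    have "h 1 < h u"
    proof (rule DERIV_pos_imp_increasing_open[OF u1 _ cont])
      fix x assume x: "1 < x" "x < u"
      have "1 powr (q - 1) < x powr (q - 1)"
        using x u0 assms by (intro powr_less_mono2) auto
      then show "\<exists>y. DERIV h x :> y \<and> y > 0"
        using der[of x] x u0 assms by (intro exI[of _ "q * x powr (q - 1) - q"]) auto
    qed simp
    then show ?thesis unfolding h_def by (simp add: algebra_simps)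
  qed
qed

lemma tangent_weak:
  fixes u q :: real
  assumes "u \<ge> 0" "q > 1"
  shows "u powr q \<ge> 1 + q * (u - 1)"
  using tangent_strict[OF assms(1) _ assms(2)] by (cases "u = 1") auto

lemma better_vec_p1:
  fixes \<sigma> :: "nat \<Rightarrow> real" and N :: nat
  assumes "N \<ge> 1" "a < N" "b < N" "\<sigma> a \<noteq> \<sigma> b"
  shows "\<exists>w. (\<Sum>j<N. \<bar>w j\<bar> powr 1) = 1 \<and> (\<Sum>j<N. \<sigma> j) * real N powr (-1/1) < (\<Sum>j<N. \<sigma> j * w j)"
proof -
  define M where "M = Max (\<sigma> ` {..<N})"
  have "M \<in> \<sigma> ` {..<N}" unfolding M_def using assms by (intro Max_in) auto
  then obtain m where m: "m < N" "\<sigma> m = M" by auto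
  have le: "\<sigma> j \<le> \<sigma> m" if "j < N" for j
    using m(2) Max_ge[of "\<sigma> ` {..<N}" "\<sigma> j"] that unfolding M_def by auto
  obtain c where c: "c < N" "\<sigma> c < \<sigma> m"
    using le assms by (metis order_le_imp_less_or_eq)
  define w where "w = (\<lambda>j. if j = m then (1::real) else 0)"
  have "(\<Sum>j<N. \<bar>w j\<bar> powr 1) = (\<Sum>j<N. w j)"
    by (intro sum.cong) (auto simp: w_def)
  also have "\<dots> = 1" using m by (simp add: w_def)
  finally have "(\<Sum>j<N. \<bar>w j\<bar> powr 1) = 1" .
  moreover have "(\<Sum>j<N. \<sigma> j * w j) = \<sigma> m"
    using m by (simp add: w_def if_distrib cong: if_cong)
  moreover have "(\<Sum>j<N. \<sigma> j) < (\<Sum>j<N. \<sigma> m)"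
    by (rule sum_strict_mono_ex1) (use le c in auto)
  moreover have "real N powr (-1/1) = 1 / real N"
    using assms by (simp add: powr_minus_divide)
  ultimately show ?thesis using assms
    by (intro exI[of _ w]) (auto simp: field_simps)
qed


lemma better_vec_pgt1:
  fixes \<sigma> :: "nat \<Rightarrow> real" and N :: nat and p :: real
  assumes N: "N \<ge> 1" and p: "p > 1" and nn: "\<forall>j<N. \<sigma> j \<ge> 0"
    and ab: "a < N" "b < N" "\<sigma> a \<noteq> \<sigma> b"
  shows "\<exists>w. (\<Sum>j<N. \<bar>w j\<bar> powr p) = 1 \<and> (\<Sum>j<N. \<sigma> j) * real N powr (-1/p) < (\<Sum>j<N. \<sigma> j * w j)"
proof -
  define S where "S = (\<Sum>j<N. \<sigma> j)"
  have S0: "S > 0"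
  proof -
    obtain c where c: "c < N" "\<sigma> c > 0" using ab nn
      by (metis order_le_imp_less_or_eq)
    have "\<sigma> c \<le> S" unfolding S_def by (rule member_le_sum) (use c nn in auto)
    thus ?thesis using c by simp
  qed
  define \<mu> where "\<mu> = S / real N"
  have \<mu>0: "\<mu> > 0" using S0 N by (simp add: \<mu>_def)
  define u where "u = (\<lambda>j. \<sigma> j / \<mu>)"
  have u0: "u j \<ge> 0" if "j < N" for j using nn that \<mu>0 by (simp add: u_def)
  have sumu: "(\<Sum>j<N. u j) = real N"
  proof -
    have "(\<Sum>j<N. u j) = S / \<mu>" by (simp add: u_def S_def sum_divide_distrib)
    also have "\<dots> = real N" using S0 N by (simp add: \<mu>_def)
    finally show ?thesis .
  qed
  define q where "q = p / (p - 1)"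
  have q1: "q > 1" using p by (simp add: q_def)
  have qp: "(q - 1) * p = q" using p by (simp add: q_def field_simps)
  define Y where "Y = (\<Sum>j<N. u j powr q)"
  have "(\<Sum>j<N. 1 + q * (u j - 1)) < Y"
    unfolding Y_def
  proof (rule sum_strict_mono_ex1)
    show "\<forall>x\<in>{..<N}. 1 + q * (u x - 1) \<le> u x powr q"
      using u0 q1 tangent_weak by auto
    have "u a \<noteq> u b" using ab \<mu>0 by (simp add: u_def)
    then obtain c where "c < N" "u c \<noteq> 1" using ab by metis
    then show "\<exists>x\<in>{..<N}. 1 + q * (u x - 1) < u x powr q"
      using u0 q1 tangent_strict by auto
  qed simp
  moreover have "(\<Sum>j<N. 1 + q * (u j - 1)) = real N"
    using sumu by (simp add: sum.distrib sum_distrib_left[symmetric] sum_subtractf algebra_simps)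
  ultimately have YN: "real N < Y" by simp
  have Y0: "Y > 0" using YN N by simp
  define w where "w = (\<lambda>j. u j powr (q - 1) / Y powr (1/p))"
  have wp: "\<bar>w j\<bar> powr p = u j powr q / Y" if "j < N" for j
  proof -
    have "\<bar>w j\<bar> = w j" using Y0 by (simp add: w_def)
    hence "\<bar>w j\<bar> powr p = (u j powr (q - 1)) powr p / (Y powr (1/p)) powr p"
      using Y0 by (simp add: w_def powr_divide)
    also have "\<dots> = u j powr q / Y"
      using Y0 p by (simp add: powr_powr qp)
    finally show ?thesis .
  qed
  have sw: "\<sigma> j * w j = \<mu> * (u j powr q / Y powr (1/p))" if "j < N" for j
  proof -
    have "u j * u j powr (q - 1) = u j powr q"
    proof (cases "u j = 0")
      case False
      then have "u j > 0" using u0[OF that] by linarith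
      then show ?thesis by (simp add: powr_add[symmetric] powr_mult_base)
    qed simp
    moreover have "\<sigma> j = \<mu> * u j" using \<mu>0 by (simp add: u_def)
    ultimately show ?thesis by (simp add: w_def)
  qed
  have "(\<Sum>j<N. \<bar>w j\<bar> powr p) = 1"
    using Y0 by (simp add: wp sum_divide_distrib[symmetric] Y_def[symmetric])
  moreover have "(\<Sum>j<N. \<sigma> j * w j) = \<mu> * (Y / Y powr (1/p))"
    by (simp add: sw sum_distrib_left[symmetric] sum_divide_distrib[symmetric] Y_def[symmetric])
  moreover have "Y / Y powr (1/p) = Y powr (1 - 1/p)"
    using Y0 by (simp add: powr_diff)
  moreover have "S * real N powr (-1/p) = \<mu> * real N powr (1 - 1/p)"
    using N by (simp add: \<mu>_def powr_diff powr_minus_divide)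
  moreover have "real N powr (1 - 1/p) < Y powr (1 - 1/p)"
    using YN p by (intro powr_less_mono2) auto
  ultimately show ?thesis using \<mu>0
    by (intro exI[of _ w]) (simp add: S_def[symmetric])
qed

lemma better_vec:
  fixes \<sigma> :: "nat \<Rightarrow> real" and N :: nat and p :: real
  assumes N: "N \<ge> 1" and p: "p \<ge> 1" and nn: "\<forall>j<N. \<sigma> j \<ge> 0"
    and ab: "a < N" "b < N" "\<sigma> a \<noteq> \<sigma> b"
  shows "\<exists>w. (\<Sum>j<N. \<bar>w j\<bar> powr p) = 1 \<and> (\<Sum>j<N. \<sigma> j) * real N powr (-1/p) < (\<Sum>j<N. \<sigma> j * w j)"
proof (cases "p = 1")
  case True then show ?thesis using better_vec_p1[OF N ab] by simp
next
  case False then show ?thesis using better_vec_pgt1[OF N _ nn ab] p by simp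
qed




lemma cnj_sgn_mult: "cnj (sgn s) * s = complex_of_real (cmod s)"
proof (cases "s = 0")
  case False
  have "cnj (sgn s) * s = (s * cnj s) / complex_of_real (cmod s)"
    by (simp add: sgn_eq mult.commute)
  also have "\<dots> = complex_of_real (cmod s)"
    using False by (simp add: complex_norm_square[symmetric] power2_eq_square)
  finally show ?thesis .
qed simp

lemma wamgm:
  fixes w y :: "'a \<Rightarrow> real"
  assumes "finite S" "S \<noteq> {}" "\<And>i. i \<in> S \<Longrightarrow> w i \<ge> 0" "sum w S = 1"
    "\<And>i. i \<in> S \<Longrightarrow> y i > 0"
  shows "(\<Prod>i\<in>S. y i powr w i) \<le> (\<Sum>i\<in>S. w i * y i)"
proof -
  have "ln (\<Sum>i \<in> S. w i *\<^sub>R y i) \<ge> (\<Sum>i \<in> S. w i * ln (y i))"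
    by (intro concave_on_sum[OF assms(1,2) ln_concave]) (use assms in auto)
  moreover have pos: "(\<Sum>i \<in> S. w i *\<^sub>R y i) > 0"
  proof -
    have "\<exists>j\<in>S. w j > 0"
    proof (rule ccontr)
      assume neg: "\<not> (\<exists>j\<in>S. w j > 0)"
      have "w j = 0" if "j \<in> S" for j
      proof -
        have "w j \<ge> 0" using assms(3)[OF that] .
        moreover have "\<not> w j > 0" using neg that by blast
        ultimately show ?thesis by linarith
      qed
      hence "sum w S = 0" by simp
      with assms(4) show False by simp
    qed
    then obtain j where j: "j \<in> S" "w j > 0" by blast
    have "w j * y j \<le> (\<Sum>i \<in> S. w i * y i)"
    proof (rule member_le_sum)
      fix i assume "i \<in> S - {j}"
      hence i: "i \<in> S" by simp
      show "0 \<le> w i * y i" by (rule mult_nonneg_nonneg[OF assms(3)[OF i] less_imp_le[OF assms(5)[OF i]]])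
    qed (use j assms(1) in auto)
    moreover have "w j * y j > 0" using j assms(5)[OF j(1)] by simp
    ultimately show ?thesis unfolding real_scaleR_def by linarith
  qed
  ultimately have "exp (\<Sum>i \<in> S. w i * ln (y i)) \<le> (\<Sum>i \<in> S. w i * y i)"
    by (simp add: ln_ge_iff)
  moreover have "exp (\<Sum>i \<in> S. w i * ln (y i)) = (\<Prod>i\<in>S. y i powr w i)"
  proof -
    have "exp (\<Sum>i \<in> S. w i * ln (y i)) = (\<Prod>i\<in>S. exp (w i * ln (y i)))"
      by (simp add: exp_sum assms(1))
    also have "\<dots> = (\<Prod>i\<in>S. y i powr w i)"
    proof (rule prod.cong)
      fix i assume "i \<in> S"
      then have "y i > 0" by (rule assms(5))
      then show "exp (w i * ln (y i)) = y i powr w i" by (simp add: powr_def mult.commute)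
    qed simp
    finally show ?thesis .
  qed
  ultimately show ?thesis by simp
qed

lemma amgm2:
  fixes z :: "nat \<Rightarrow> real" and p :: real and r :: nat
  assumes p: "p \<ge> 1" "real r \<le> p" and z: "\<forall>k<r. z k \<ge> 0"
  shows "(\<Prod>k<r. z k powr (1/p)) \<le> (\<Sum>k<r. z k) / p + (1 - real r / p)"
proof (cases "\<exists>k<r. z k = 0")
  case True
  then have "(\<Prod>k<r. z k powr (1/p)) = 0" by auto
  moreover have "(\<Sum>k<r. z k) / p \<ge> 0" using z p by (auto intro!: sum_nonneg divide_nonneg_pos)
  moreover have "real r / p \<le> 1" using p by simp
  ultimately show ?thesis by linarith
next
  case False
  define w where "w = (\<lambda>k. if k < r then 1/p else 1 - real r / p)"
  define y where "y = (\<lambda>k. if k < r then z k else 1)"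
  have "(\<Prod>k\<in>{..<Suc r}. y k powr w k) \<le> (\<Sum>k\<in>{..<Suc r}. w k * y k)"
  proof (rule wamgm)
    show "w i \<ge> 0" if "i \<in> {..<Suc r}" for i using p by (auto simp: w_def)
    show "sum w {..<Suc r} = 1" using p by (simp add: w_def)
    show "y i > 0" if "i \<in> {..<Suc r}" for i
      using False z that by (auto simp: y_def order_le_less)
  qed auto
  moreover have "(\<Prod>k\<in>{..<Suc r}. y k powr w k) = (\<Prod>k<r. z k powr (1/p))"
    by (simp add: y_def w_def)
  moreover have "(\<Sum>k\<in>{..<Suc r}. w k * y k) = (\<Sum>k<r. z k) / p + (1 - real r / p)"
    by (simp add: y_def w_def sum_divide_distrib)
  ultimately show ?thesis by simp
qed

lemma cmod_nonneg: "Im z = 0 \<Longrightarrow> Re z \<ge> 0 \<Longrightarrow> cmod z = Re z"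
  by (metis cmod_eq_Re abs_of_nonneg)

lemma sum_slices:
  assumes "k < r"
  shows "(\<Sum>j<n k. slice_sum r n A k j) = (\<Sum>i\<in>idx r n. A i)"
  using fiber_sum[OF assms, of A "\<lambda>_. 1" n] by (simp add: slice_sum_def)

lemma slice_nonneg:
  assumes "nonneg_matrix r n A"
  shows "Im (slice_sum r n A k j) = 0" "Re (slice_sum r n A k j) \<ge> 0"
  using assms by (auto simp: slice_sum_def nonneg_matrix_def intro!: sum_nonneg sum.neutral)




lemma upper:
  fixes p :: real and r :: nat and n :: "nat \<Rightarrow> nat" and A :: "(nat \<Rightarrow> nat) \<Rightarrow> complex"
  assumes p: "p \<ge> 1" "real r \<le> p" and npos: "\<forall>k<r. n k \<ge> 1"
    and nn: "nonneg_matrix r n A" and reg: "regular r n A"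
    and x: "\<forall>k<r. vec_pnorm p (n k) (x k) = 1"
  shows "cmod (mform r n A x) \<le> (\<Sum>i\<in>idx r n. Re (A i)) / (\<Prod>k<r. real (n k) powr (1/p))"
proof -
  define a where "a = (\<lambda>i. Re (A i))"
  define C where "C = (\<Prod>k<r. real (n k) powr (1/p))"
  define t where "t = (\<lambda>k j. cmod (x k j))"
  define T where "T = (\<Sum>i\<in>idx r n. a i)"
  define c0 where "c0 = 1 - real r / p"
  have C0: "C > 0" unfolding C_def using npos by (auto intro!: prod_pos)
  have a0: "a i \<ge> 0" "cmod (A i) = a i" if "i \<in> idx r n" for i
    using nn that cmod_nonneg by (auto simp: nonneg_matrix_def a_def)
  have t0: "t k j \<ge> 0" for k j by (simp add: t_def)
  have step1: "cmod (mform r n A x) \<le> (\<Sum>i\<in>idx r n. a i * (\<Prod>k<r. t k (i k)))"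
    unfolding mform_def
  proof (rule order_trans[OF norm_sum], rule sum_mono)
    fix i assume i: "i \<in> idx r n"
    show "cmod (A i * (\<Prod>k<r. cnj (x k (i k)))) \<le> a i * (\<Prod>k<r. t k (i k))"
      by (simp only: norm_mult prod_norm[symmetric] complex_mod_cnj a0[OF i] t_def)
  qed
  have step2: "(\<Prod>k<r. t k (i k)) = (\<Prod>k<r. (real (n k) * t k (i k) powr p) powr (1/p)) / C" for i
  proof -
    have "(real (n k) * t k (i k) powr p) powr (1/p) = real (n k) powr (1/p) * t k (i k)" for k
    proof -
      have "(real (n k) * t k (i k) powr p) powr (1/p) = real (n k) powr (1/p) * (t k (i k) powr p) powr (1/p)"
        by (rule powr_mult; simp add: t0)
      also have "(t k (i k) powr p) powr (1/p) = t k (i k)"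
        using p t0[of k "i k"] by (cases "t k (i k) = 0") (auto simp: powr_powr)
      finally show ?thesis .
    qed
    hence "(\<Prod>k<r. (real (n k) * t k (i k) powr p) powr (1/p)) = C * (\<Prod>k<r. t k (i k))"
      by (simp add: C_def prod.distrib)
    thus ?thesis using C0 by simp
  qed
  have step3: "(\<Prod>k<r. (real (n k) * t k (i k) powr p) powr (1/p)) \<le> (\<Sum>k<r. real (n k) * t k (i k) powr p) / p + c0" for i
    unfolding c0_def by (rule amgm2) (use p t0 in auto)
  have pw: "a i * (\<Prod>k<r. t k (i k)) \<le> a i * ((\<Sum>k<r. real (n k) * t k (i k) powr p) / p + c0) / C"
    if i: "i \<in> idx r n" for i
  proof -
    have "(\<Prod>k<r. t k (i k)) \<le> ((\<Sum>k<r. real (n k) * t k (i k) powr p) / p + c0) / C"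
      unfolding step2[of i] by (rule divide_right_mono[OF step3]) (use C0 in simp)
    hence "a i * (\<Prod>k<r. t k (i k)) \<le> a i * (((\<Sum>k<r. real (n k) * t k (i k) powr p) / p + c0) / C)"
      by (rule mult_left_mono) (use a0(1)[OF i] in simp)
    thus ?thesis by simp
  qed
  have step4: "(\<Sum>i\<in>idx r n. a i * (\<Prod>k<r. t k (i k))) \<le>
      (\<Sum>i\<in>idx r n. a i * ((\<Sum>k<r. real (n k) * t k (i k) powr p) / p + c0)) / C"
    unfolding sum_divide_distrib[of _ "idx r n" C] by (intro sum_mono pw)
  define \<sigma> where "\<sigma> = (\<lambda>k j. \<Sum>i\<in>{i\<in>idx r n. i k = j}. a i)"
  have \<sigma>Re: "\<sigma> k j = Re (slice_sum r n A k j)" for k j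
    by (simp add: \<sigma>_def slice_sum_def a_def)
  have \<sigma>const: "\<sigma> k j = \<sigma> k 0" if "k < r" "j < n k" for k j
  proof -
    have "0 < n k" using npos that by auto
    then have "slice_sum r n A k j = slice_sum r n A k 0"
      using reg that unfolding regular_def by blast
    then show ?thesis by (simp only: \<sigma>Re)
  qed
  have Tk: "T = real (n k) * \<sigma> k 0" if k: "k < r" for k
  proof -
    have "T = (\<Sum>i\<in>idx r n. a i * 1)" by (simp add: T_def)
    also have "\<dots> = (\<Sum>j<n k. 1 * \<sigma> k j)" unfolding \<sigma>_def by (rule fiber_sum[OF k])
    also have "\<dots> = (\<Sum>j<n k. \<sigma> k 0)" 
    proof (rule sum.cong[OF refl])
      fix j assume "j \<in> {..<n k}"
      then have "\<sigma> k j = \<sigma> k 0" using \<sigma>const[OF k, of j] by simp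
      then show "1 * \<sigma> k j = \<sigma> k 0" by simp
    qed
    finally show ?thesis by simp
  qed
  have Sk: "(\<Sum>i\<in>idx r n. a i * t k (i k) powr p) = \<sigma> k 0" if k: "k < r" for k
  proof -
    have "(\<Sum>i\<in>idx r n. a i * t k (i k) powr p) = (\<Sum>j<n k. t k j powr p * \<sigma> k j)"
      unfolding \<sigma>_def by (rule fiber_sum[OF k])
    also have "\<dots> = (\<Sum>j<n k. t k j powr p * \<sigma> k 0)"
    proof (rule sum.cong[OF refl])
      fix j assume "j \<in> {..<n k}"
      then have "\<sigma> k j = \<sigma> k 0" using \<sigma>const[OF k, of j] by simp
      then show "t k j powr p * \<sigma> k j = t k j powr p * \<sigma> k 0" by simp
    qed
    also have "\<dots> = (\<Sum>j<n k. t k j powr p) * \<sigma> k 0"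
      by (simp only: sum_distrib_right)
    also have "(\<Sum>j<n k. t k j powr p) = 1"
      unfolding t_def by (rule pnorm_sum1) (use x k p in auto)
    finally show ?thesis by simp
  qed
  have step5: "(\<Sum>i\<in>idx r n. a i * ((\<Sum>k<r. real (n k) * t k (i k) powr p) / p + c0)) = T"
  proof -
    have "(\<Sum>i\<in>idx r n. a i * ((\<Sum>k<r. real (n k) * t k (i k) powr p) / p + c0))
        = (\<Sum>k<r. real (n k) / p * (\<Sum>i\<in>idx r n. a i * t k (i k) powr p)) + c0 * T"
      by (simp add: T_def algebra_simps sum.distrib sum_distrib_left sum_divide_distrib
          sum.swap[of _ "idx r n"])
    also have "\<dots> = (\<Sum>k<r. T / p) + c0 * T"
    proof -
      have "(\<Sum>k<r. real (n k) / p * (\<Sum>i\<in>idx r n. a i * t k (i k) powr p)) = (\<Sum>k<r. T / p)"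
      proof (rule sum.cong[OF refl])
        fix k assume "k \<in> {..<r}" hence k: "k < r" by simp
        show "real (n k) / p * (\<Sum>i\<in>idx r n. a i * t k (i k) powr p) = T / p"
          using Sk[OF k] Tk[OF k] by simp
      qed
      then show ?thesis by (rule arg_cong[where f="\<lambda>x. x + c0 * T"])
    qed
    also have "\<dots> = T" using p by (simp add: c0_def field_simps)
    finally show ?thesis .
  qed
  show ?thesis
    using step1 step4 step5 by (simp add: T_def C_def a_def)
qed




lemma part_a:
  fixes p :: real and r :: nat and n :: "nat \<Rightarrow> nat" and A :: "(nat \<Rightarrow> nat) \<Rightarrow> complex"
  assumes p: "p \<ge> 1" and npos: "\<forall>k<r. n k \<ge> 1" and k: "k < r"
  shows "spec_pnorm p r n A \<ge> (\<Sum>j<n k. cmod (slice_sum r n A k j)) / (\<Prod>k'<r. real (n k') powr (1 / p))"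
proof -
  define s where "s = slice_sum r n A k"
  define c where "c = real (n k) powr (-1/p)"
  define P' where "P' = (\<Prod>m\<in>{..<r}-{k}. real (n m) powr (-1/p))"
  define C where "C = (\<Prod>k'<r. real (n k') powr (1 / p))"
  define v where "v = (\<lambda>j. complex_of_real c * (if s j = 0 then 1 else sgn (s j)))"
  have c0: "c \<ge> 0" by (simp add: c_def)
  have cv: "cmod (v j) = c" for j
    using c0 by (auto simp: v_def norm_mult norm_sgn)
  have "vec_pnorm p (n k) v = vec_pnorm p (n k) (\<lambda>_. complex_of_real c)"
    unfolding vec_pnorm_def using c0 by (simp add: cv)
  also have "\<dots> = 1" unfolding c_def by (rule pnorm_const) (use npos k p in auto)
  finally have vn: "vec_pnorm p (n k) v = 1" .
  have cs: "cnj (v j) * s j = complex_of_real (c * cmod (s j))" for j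
    by (cases "s j = 0") (auto simp: v_def cnj_sgn_mult)
  have "mform r n A (xv p n k v) = complex_of_real P' * (\<Sum>j<n k. cnj (v j) * s j)"
    unfolding P'_def s_def by (rule mform_xv[OF k])
  also have "\<dots> = complex_of_real (P' * c * (\<Sum>j<n k. cmod (s j)))"
    by (simp add: cs sum_distrib_left mult.assoc)
  also have "P' * c = 1 / C" unfolding P'_def c_def C_def by (rule prod_rel[OF k npos])
  finally have m: "mform r n A (xv p n k v) = complex_of_real (1 / C * (\<Sum>j<n k. cmod (s j)))" .
  have C0: "C > 0" unfolding C_def using npos by (auto intro!: prod_pos)
  have "cmod (mform r n A (xv p n k v)) = (\<Sum>j<n k. cmod (s j)) / C"
    unfolding m norm_of_real using C0 by (simp add: sum_nonneg)
  moreover have "cmod (mform r n A (xv p n k v)) \<le> spec_pnorm p r n A"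
    by (rule spec_ge) (use xv_ok[OF _ npos vn] p in auto)
  ultimately show ?thesis by (simp add: s_def C_def)
qed

lemma eq_imp_const:
  fixes p :: real and r :: nat and n :: "nat \<Rightarrow> nat" and A :: "(nat \<Rightarrow> nat) \<Rightarrow> complex"
  assumes p: "p \<ge> 1" and npos: "\<forall>k<r. n k \<ge> 1" and k: "k < r" and nn: "nonneg_matrix r n A"
    and eq: "spec_pnorm p r n A = (\<Sum>j<n k. cmod (slice_sum r n A k j)) / (\<Prod>k'<r. real (n k') powr (1 / p))"
    and jj: "j < n k" "j' < n k"
  shows "slice_sum r n A k j = slice_sum r n A k j'"
proof (rule ccontr)
  assume ne: "slice_sum r n A k j \<noteq> slice_sum r n A k j'"
  define \<sigma> where "\<sigma> = (\<lambda>j. Re (slice_sum r n A k j))"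
  have sr: "slice_sum r n A k j = complex_of_real (\<sigma> j)" for j
    using slice_nonneg[OF nn, of k j] by (simp add: \<sigma>_def complex_eq_iff)
  have \<sigma>0: "\<forall>j<n k. \<sigma> j \<ge> 0" using slice_nonneg[OF nn] by (simp add: \<sigma>_def)
  have "\<sigma> j \<noteq> \<sigma> j'" using ne by (simp add: sr)
  then obtain w where w1: "(\<Sum>j<n k. \<bar>w j\<bar> powr p) = 1"
     and wgt: "(\<Sum>j<n k. \<sigma> j) * real (n k) powr (-1/p) < (\<Sum>j<n k. \<sigma> j * w j)"
    using better_vec[of "n k" p \<sigma> j j'] npos k p \<sigma>0 jj by auto
  define v where "v = (\<lambda>j. complex_of_real (w j))"
  have vn: "vec_pnorm p (n k) v = 1" using w1 by (simp add: vec_pnorm_def v_def)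
  define P' where "P' = (\<Prod>m\<in>{..<r}-{k}. real (n m) powr (-1/p))"
  define C where "C = (\<Prod>k'<r. real (n k') powr (1 / p))"
  have P'0: "P' > 0" unfolding P'_def using npos by (auto intro!: prod_pos)
  have "mform r n A (xv p n k v) = complex_of_real P' * (\<Sum>j<n k. cnj (v j) * slice_sum r n A k j)"
    unfolding P'_def by (rule mform_xv[OF k])
  also have "\<dots> = complex_of_real (P' * (\<Sum>j<n k. \<sigma> j * w j))"
    by (simp add: sr v_def mult.commute)
  finally have m: "mform r n A (xv p n k v) = complex_of_real (P' * (\<Sum>j<n k. \<sigma> j * w j))" .
  have "cmod (mform r n A (xv p n k v)) \<ge> P' * (\<Sum>j<n k. \<sigma> j * w j)"
    unfolding m norm_of_real by simp
  moreover have "P' * (\<Sum>j<n k. \<sigma> j * w j) > P' * ((\<Sum>j<n k. \<sigma> j) * real (n k) powr (-1/p))"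
    using wgt P'0 by simp
  moreover have "P' * ((\<Sum>j<n k. \<sigma> j) * real (n k) powr (-1/p)) = (\<Sum>j<n k. \<sigma> j) / C"
    using prod_rel[OF k npos, of p] unfolding P'_def C_def by (simp add: field_simps)
  moreover have "spec_pnorm p r n A = (\<Sum>j<n k. \<sigma> j) / C"
  proof -
    have "(\<Sum>j<n k. cmod (slice_sum r n A k j)) = (\<Sum>j<n k. \<sigma> j)"
      using \<sigma>0 by (intro sum.cong) (auto simp: sr)
    then show ?thesis using eq by (simp add: C_def)
  qed
  moreover have "cmod (mform r n A (xv p n k v)) \<le> spec_pnorm p r n A"
    by (rule spec_ge) (use xv_ok[OF _ npos vn] p in auto)
  ultimately show False by linarith
qed




lemma sumT:
  assumes nn: "nonneg_matrix r n A" and k: "k < r"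
  shows "(\<Sum>j<n k. cmod (slice_sum r n A k j)) = (\<Sum>i\<in>idx r n. Re (A i))"
proof -
  have "(\<Sum>j<n k. cmod (slice_sum r n A k j)) = (\<Sum>j<n k. Re (slice_sum r n A k j))"
    by (intro sum.cong refl cmod_nonneg slice_nonneg[OF nn])
  also have "\<dots> = Re (\<Sum>j<n k. slice_sum r n A k j)" by simp
  also have "\<dots> = Re (\<Sum>i\<in>idx r n. A i)" by (simp only: sum_slices[OF k])
  also have "\<dots> = (\<Sum>i\<in>idx r n. Re (A i))" by simp
  finally show ?thesis .
qed

theorem theorem21:
  fixes p :: real and r :: nat and n :: "nat \<Rightarrow> nat" and A :: "(nat \<Rightarrow> nat) \<Rightarrow> complex"
  assumes p: "p \<ge> 1"
    and n_pos: "\<forall>k<r. n k \<ge> 1"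
  shows
    "(\<forall>k<r. spec_pnorm p r n A \<ge>
        (\<Sum>j<n k. cmod (slice_sum r n A k j)) / (\<Prod>k'<r. real (n k') powr (1 / p)))
     \<and>
     ((nonneg_matrix r n A \<and> p > 1 \<and>
       (\<forall>k<r. spec_pnorm p r n A =
          (\<Sum>j<n k. cmod (slice_sum r n A k j)) / (\<Prod>k'<r. real (n k') powr (1 / p))))
      \<longrightarrow> regular r n A)
     \<and>
     ((p \<ge> real r \<and> nonneg_matrix r n A) \<longrightarrow>
       ((\<forall>k<r. spec_pnorm p r n A =
          (\<Sum>j<n k. cmod (slice_sum r n A k j)) / (\<Prod>k'<r. real (n k') powr (1 / p)))
        \<longleftrightarrow> regular r n A))"
proof -
  have a: "\<forall>k<r. spec_pnorm p r n A \<ge>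
        (\<Sum>j<n k. cmod (slice_sum r n A k j)) / (\<Prod>k'<r. real (n k') powr (1 / p))"
    using part_a[OF p n_pos] by blast
  have b: "regular r n A" if nn: "nonneg_matrix r n A"
    and eq: "\<forall>k<r. spec_pnorm p r n A =
          (\<Sum>j<n k. cmod (slice_sum r n A k j)) / (\<Prod>k'<r. real (n k') powr (1 / p))"
    unfolding regular_def
  proof (intro allI impI)
    fix k j j' assume "k < r" "j < n k" "j' < n k"
    then show "slice_sum r n A k j = slice_sum r n A k j'"
      using eq_imp_const[OF p n_pos _ nn] eq by blast
  qed
  have c: "\<forall>k<r. spec_pnorm p r n A =
          (\<Sum>j<n k. cmod (slice_sum r n A k j)) / (\<Prod>k'<r. real (n k') powr (1 / p))"
    if pr: "p \<ge> real r" and nn: "nonneg_matrix r n A" and reg: "regular r n A"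
  proof (intro allI impI)
    fix k assume k: "k < r"
    have le: "spec_pnorm p r n A \<le> (\<Sum>i\<in>idx r n. Re (A i)) / (\<Prod>k<r. real (n k) powr (1/p))"
      by (rule spec_le) (use p n_pos upper[OF p pr n_pos nn reg] in auto)
    show "spec_pnorm p r n A =
          (\<Sum>j<n k. cmod (slice_sum r n A k j)) / (\<Prod>k'<r. real (n k') powr (1 / p))"
    proof -
      have "spec_pnorm p r n A \<ge> (\<Sum>i\<in>idx r n. Re (A i)) / (\<Prod>k<r. real (n k) powr (1/p))"
        using a[rule_format, OF k] by (simp only: sumT[OF nn k])
      then show ?thesis unfolding sumT[OF nn k] using le by (intro order_antisym)
    qed
  qed
  show ?thesis using a b c by blast
qed


end
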